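(* Let $(c_n)_{n\ge 0}$ be the sequence defined in the context. Then $c_0=0$, $c_1=c_2=1$, $c_3=0$, and $$c_{8n-1}=c_{8n}=c_{8n+1}=c_{8n+2}=c_{2n-1}\quad\text{for all } n\ge 1,$$ $$c_{8n+3}=c_{8n+4}=c_{8n+5}=c_{8n+6}=0\quad\text{for all } n\ge 0.$$
   Context: For $n\in\mathbb{N}$ let $s_2(n)$ be the sum of the binary digits of $n$ and $t_n=s_2(n)\bmod 2$ (the Prouhet–Thue–Morse sequence). Let $F(X)=\sum_{n\ge1}t_nX^n\in\mathbb{F}_2[[X]]$ and let $G(X)=\sum_{n\ge1}c_nX^n\in\mathbb{F}_2[[X]]$ be its compositional inverse, i.e. $F(G(X))=G(F(X))=X$; set $c_0=0$. The $c_n$ are identified with integers in $\{0,1\}$. *)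

theory Defs
  imports "HOL-Library.Z2" "HOL-Computational_Algebra.Formal_Power_Series"
begin

fun s2 :: "nat \<Rightarrow> nat" where
  "s2 n = (if n = 0 then 0 else n mod 2 + s2 (n div 2))"

declare s2.simps[simp del]

definition tm :: "nat \<Rightarrow> bit" where
  "tm n = of_nat (s2 n mod 2)"

definition TM_F :: "bit fps" where
  "TM_F = Abs_fps (\<lambda>n. if n = 0 then 0 else tm n)"

end

theory Submission
  imports Defs
begin


lemma bit_add_self[simp]: "(x::bit) + x = 0"
  by (cases x) simp_all

function hh :: "nat \<Rightarrow> bit" where
  "hh 0 = 0"
| "hh (Suc n) = hh n + (if Suc n mod 4 = 3 then hh (Suc n div 4) else 0)
     + (if Suc n = 1 \<or> Suc n = 3 then 1 else 0)"
  by pat_completeness auto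
termination by (relation "measure id") auto

lemma hh_step_no:
  assumes "n = Suc p" "\<not> n mod 4 = 3" "n \<noteq> 1" "n \<noteq> 3"
  shows "hh n = hh p"
proof -
  have "hh n = hh p + 0 + 0"
    using assms by (simp only: hh.simps(2) if_False simp_thms)
  thus ?thesis by (simp only: add_0_right)
qed

lemma hh_even: "hh (2*k+2) = hh (2*k+1)"
  by (rule hh_step_no) presburger+

lemma hh_blk: "hh (4*m+4) = hh (4*m+3)" "hh (4*m+5) = hh (4*m+4)" "hh (4*m+6) = hh (4*m+5)"
  by (rule hh_step_no; presburger)+

lemma hh_3:
  assumes "n = 4*m+3" "p = 4*m+2"
  shows "hh n = hh p + hh m + (if m = 0 then 1 else 0)"
proof -
  have a: "Suc p mod 4 = 3" "Suc p div 4 = m" using assms by presburger+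
  have b: "(Suc p = 1 \<or> Suc p = 3) = (m = 0)" using assms by presburger
  have c: "n = Suc p" using assms by simp
  show ?thesis
    by (simp only: c hh.simps(2) a b if_True simp_thms)
qed

lemma hh_small: "hh 1 = 1" "hh 2 = 1" "hh 3 = 0"
proof -
  have h1: "hh 1 = hh 0 + 0 + 1" by (simp only: One_nat_def hh.simps(2)) simp
  show h1': "hh 1 = 1" by (simp only: h1 hh.simps(1) add_0_left)
  have h2: "hh 2 = hh 1" by (rule hh_step_no) simp_all
  show h2': "hh 2 = 1" by (simp only: h2 h1')
  have h3: "hh 3 = hh 2 + hh 0 + 1" using hh_3[of 3 0 2] by simp
  show "hh 3 = 0" by (simp only: h3 h2' hh.simps(1) add_0_right bit_add_self)
qed

lemma hh_8: "hh (8*n+3) = 0"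
proof (induction n)
  case 0 then show ?case using hh_small by simp
next
  case (Suc n)
  have e1: "hh (8*Suc n+3) = hh (8*n+10) + hh (2*n+2) + 0"
    using hh_3[of "8*Suc n+3" "2*n+2" "8*n+10"] by simp
  have e2: "hh (8*n+10) = hh (8*n+9)" "hh (8*n+9) = hh (8*n+8)" "hh (8*n+8) = hh (8*n+7)"
    by (rule hh_step_no; presburger)+
  have e3: "hh (8*n+7) = hh (8*n+6) + hh (2*n+1) + 0"
    using hh_3[of "8*n+7" "2*n+1" "8*n+6"] by simp
  have e4: "hh (8*n+6) = hh (8*n+5)" "hh (8*n+5) = hh (8*n+4)" "hh (8*n+4) = hh (8*n+3)"
    by (rule hh_step_no; presburger)+
  have e5: "hh (2*n+2) = hh (2*n+1)" by (rule hh_even)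
  show ?case by (simp only: e1 e2 e3 e4 e5 Suc.IH add_0_right add_0_left bit_add_self)
qed

lemma hh_main:
  "hh 0 = 0 \<and> hh 1 = 1 \<and> hh 2 = 1 \<and> hh 3 = 0
    \<and> (\<forall>n::nat. n \<ge> 1 \<longrightarrow>
          hh (8*n - 1) = hh (2*n - 1) \<and> hh (8*n) = hh (2*n - 1)
        \<and> hh (8*n + 1) = hh (2*n - 1) \<and> hh (8*n + 2) = hh (2*n - 1))
    \<and> (\<forall>n::nat. hh (8*n + 3) = 0 \<and> hh (8*n + 4) = 0
        \<and> hh (8*n + 5) = 0 \<and> hh (8*n + 6) = 0)"
proof (intro conjI allI impI)
  fix n :: nat assume "n \<ge> 1"
  then obtain k where k: "n = Suc k" by (cases n) auto
  have c: "8*n - 1 = 8*k+7" "8*n = 8*k+8" "8*n+1 = 8*k+9" "8*n+2 = 8*k+10" "2*n-1 = 2*k+1"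
    using k by simp_all
  have e3: "hh (8*k+7) = hh (8*k+6) + hh (2*k+1) + 0"
    using hh_3[of "8*k+7" "2*k+1" "8*k+6"] by simp
  have e4: "hh (8*k+6) = hh (8*k+5)" "hh (8*k+5) = hh (8*k+4)" "hh (8*k+4) = hh (8*k+3)"
    by (rule hh_step_no; presburger)+
  have a: "hh (8*k+7) = hh (2*k+1)"
    by (simp only: e3 e4 hh_8 add_0_right add_0_left)
  have b: "hh (8*k+10) = hh (8*k+9)" "hh (8*k+9) = hh (8*k+8)" "hh (8*k+8) = hh (8*k+7)"
    by (rule hh_step_no; presburger)+
  show "hh (8*n - 1) = hh (2*n - 1)" by (subst c(1), subst c(5), rule a)
  show "hh (8*n) = hh (2*n - 1)" by (simp only: c a b)
  show "hh (8*n+1) = hh (2*n - 1)" by (subst c(3), simp only: c a b)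
  show "hh (8*n+2) = hh (2*n - 1)" by (subst c(4), simp only: c a b)
next
  fix n :: nat
  have e4: "hh (8*n+6) = hh (8*n+5)" "hh (8*n+5) = hh (8*n+4)" "hh (8*n+4) = hh (8*n+3)"
    by (rule hh_step_no; presburger)+
  show "hh (8*n+3) = 0" by (rule hh_8)
  show "hh (8*n+4) = 0" by (simp only: e4 hh_8)
  show "hh (8*n+5) = 0" by (simp only: e4 hh_8)
  show "hh (8*n+6) = 0" by (simp only: e4 hh_8)
qed (simp_all only: hh_small hh.simps(1))


unbundle fps_syntax

lemma bit_mult_self: "(x::bit) * x = x" by (cases x) simp_all

lemma sum_sym_bit:
  fixes g :: "nat \<Rightarrow> bit"
  assumes sym: "\<And>i. i \<le> n \<Longrightarrow> g (n - i) = g i"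
  shows "(\<Sum>i=0..n. g i) = (if even n then g (n div 2) else 0)"
proof -
  define A where "A = {i. i \<le> n \<and> 2*i < n}"
  define B where "B = {i. i \<le> n \<and> 2*i > n}"
  define C where "C = {i. i \<le> n \<and> 2*i = n}"
  have fin: "finite A" "finite B" "finite C" unfolding A_def B_def C_def by auto
  have u: "{0..n} = (A \<union> B) \<union> C" unfolding A_def B_def C_def by auto
  have d1: "A \<inter> B = {}" "(A \<union> B) \<inter> C = {}" unfolding A_def B_def C_def by auto
  have s: "sum g {0..n} = sum g A + sum g B + sum g C"
    unfolding u using fin d1 by (simp add: sum.union_disjoint)
  have ab: "sum g B = sum g A"
    by (rule sum.reindex_bij_witness[of B "\<lambda>i. n - i" "\<lambda>i. n - i"])
       (auto simp: A_def B_def sym)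
  have c: "sum g C = (if even n then g (n div 2) else 0)"
  proof (cases "even n")
    case True
    then have "C = {n div 2}" unfolding C_def by auto
    then show ?thesis using True by simp
  next
    case False
    then have "C = {}" unfolding C_def by auto
    then show ?thesis using False by simp
  qed
  show ?thesis by (simp only: s ab c bit_add_self add_0_left)
qed

lemma sq_nth: "((A::bit fps) * A) $ n = (if even n then A $ (n div 2) else 0)"
proof -
  have "(A * A) $ n = (\<Sum>i=0..n. A$i * A$(n-i))" by (simp add: fps_mult_nth)
  also have "\<dots> = (if even n then A$(n div 2) * A$(n - n div 2) else 0)"
    by (rule sum_sym_bit) (simp add: mult.commute)
  also have "\<dots> = (if even n then A $ (n div 2) else 0)"
    by (cases "even n") (auto simp: bit_mult_self elim!: evenE)
  finally show ?thesis .
qed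

lemma pow4_nth: "((A::bit fps) ^ 4) $ n = (if 4 dvd n then A $ (n div 4) else 0)"
proof -
  have "A ^ 4 = (A*A)*(A*A)" by (simp add: power_numeral_reduce mult.assoc)
  then have "(A^4) $ n = (if even n then (if even (n div 2) then A $ (n div 2 div 2) else 0) else 0)"
    by (simp only: sq_nth)
  also have "\<dots> = (if 4 dvd n then A $ (n div 4) else 0)"
    by (auto simp: div_mult2_eq)
  finally show ?thesis .
qed


unbundle fps_syntax
declare add_bit_eq_xor[simp del] mult_bit_eq_and[simp del] power_bit_unfold[simp del]

lemma bit_add_self2[simp]: "(x::bit) + (x + y) = y"
  by (metis add.assoc add_0_left bit_add_self)

lemma s2_double: "s2 (2*n) = s2 n"
  by (cases "n = 0") (simp_all add: s2.simps[of "2*n"])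

lemma s2_odd: "s2 (Suc (2*n)) = Suc (s2 n)"
  by (simp add: s2.simps[of "Suc (2*n)"])

lemma tm_0: "tm 0 = 0" by (simp add: tm_def s2.simps)
lemma tm_double: "tm (2*n) = tm n" by (simp add: tm_def s2_double)
lemma tm_odd: "tm (Suc (2*n)) = tm n + 1"
  by (cases "even (s2 n)") (auto simp: tm_def s2_odd mod_Suc elim!: evenE oddE)

lemma F_nth: "TM_F $ n = tm n"
  by (simp add: TM_F_def tm_0)

lemma onepX_nth: "((1 + fps_X) * (P::bit fps)) $ n = P$n + (if n = 0 then 0 else P$(n-1))"
proof -
  have "(1 + fps_X) * P = P + fps_X * P" by (simp add: distrib_right)
  then show ?thesis by simp
qed

definition Oddps :: "bit fps" where "Oddps = Abs_fps (\<lambda>n. if odd n then 1 else 0)"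

lemma step1: "(1 + fps_X) * (TM_F * TM_F) + TM_F = Oddps"
proof (rule fps_ext)
  fix n
  show "((1 + fps_X) * (TM_F * TM_F) + TM_F) $ n = Oddps $ n"
  proof (cases "even n")
    case True
    then obtain k where k: "n = 2*k" by (auto elim!: evenE)
    show ?thesis
    proof (cases k)
      case 0 then show ?thesis using k by (simp add: onepX_nth sq_nth F_nth Oddps_def tm_0)
    next
      case (Suc j)
      then have "odd (n - 1)" using k by simp
      then show ?thesis using k True by (simp add: onepX_nth sq_nth F_nth Oddps_def tm_double)
    qed
  next
    case False
    then obtain k where k: "n = Suc (2*k)" by (auto elim!: oddE)
    then show ?thesis by (simp add: onepX_nth sq_nth F_nth Oddps_def tm_odd)
  qed
qed

lemma step2: "(1 + fps_X) * ((1 + fps_X) * Oddps) = (fps_X :: bit fps)"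
proof -
  have a: "(1 + fps_X) * Oddps = Abs_fps (\<lambda>n. if n = 0 then 0 else 1)"
  proof (rule fps_ext)
    fix n show "((1 + fps_X) * Oddps) $ n = Abs_fps (\<lambda>n. if n = 0 then 0 else (1::bit)) $ n"
      by (cases n) (auto simp: onepX_nth Oddps_def)
  qed
  show ?thesis unfolding a
  proof (rule fps_ext)
    fix n show "((1 + fps_X) * Abs_fps (\<lambda>n. if n = 0 then 0 else (1::bit))) $ n = (fps_X :: bit fps) $ n"
      by (cases n) (auto simp: onepX_nth fps_X_nth)
  qed
qed

lemma TM_eq: "(1 + fps_X) * ((1 + fps_X) * ((1 + fps_X) * (TM_F * TM_F) + TM_F)) = fps_X"
  using step1 step2 by simp


unbundle fps_syntax
declare add_bit_eq_xor[simp del] mult_bit_eq_and[simp del] power_bit_unfold[simp del]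

definition Qp :: "bit fps \<Rightarrow> bit fps" where
  "Qp Y = (1+Y)*((1+Y)*((1+Y)*(fps_X*fps_X)+fps_X)) - Y"

lemma Qp_diff_gen:
  fixes A B X :: "'a::comm_ring_1"
  shows "((1+A)*((1+A)*((1+A)*(X*X)+X)) - A) - ((1+B)*((1+B)*((1+B)*(X*X)+X)) - B)
     = (A - B) * (X * (X*((1+A)*(1+A)+(1+A)*(1+B)+(1+B)*(1+B)) + ((1+A)+(1+B))) - 1)"
  by (simp add: algebra_simps)

lemma HQ_gen:
  fixes H X :: "'a::comm_ring_1"
  shows "(X*H+1+X)*((1+H)*((1+H)*((1+H)*(X*X)+X)) - H) = X^3*H^4 + (1+X)*H + X + X^3
    + 2 * (- H + X*X + 3*X*X*H + 3*X*X*H*H + X*X*H*H*H + 2*X*X*X*H + 3*X*X*X*H*H + 2*X*X*X*H*H*H)"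
  by (simp add: algebra_simps eval_nat_numeral)

lemma Qp_unique:
  assumes "Qp A = 0" "Qp B = 0"
  shows "A = B"
proof -
  define W where "W = fps_X * (fps_X*((1+A)*(1+A)+(1+A)*(1+B)+(1+B)*(1+B)) + ((1+A)+(1+B))) - (1::bit fps)"
  have "(A - B) * W = Qp A - Qp B" unfolding W_def Qp_def by (rule Qp_diff_gen[symmetric])
  then have "(A - B) * W = 0" using assms by simp
  moreover have "W \<noteq> 0"
  proof
    assume "W = 0"
    then have "W $ 0 = 0" by simp
    moreover have "W $ 0 = - 1" unfolding W_def by simp
    ultimately show False by simp
  qed
  ultimately show ?thesis by simp
qed

lemma G_Qp:
  assumes g0: "G $ 0 = 0" and FG: "TM_F oo G = fps_X"
  shows "Qp G = 0"
proof -
  have "((1 + fps_X) * ((1 + fps_X) * ((1 + fps_X) * (TM_F * TM_F) + TM_F))) oo G = fps_X oo G"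
    using TM_eq by simp
  then have "(1+G)*((1+G)*((1+G)*(fps_X*fps_X)+fps_X)) = G"
    using g0 FG by (simp add: fps_compose_mult_distrib fps_compose_add_distrib)
  then show ?thesis unfolding Qp_def by simp
qed

definition HH :: "bit fps" where "HH = Abs_fps hh"

lemma HH_quartic: "fps_X^3 * HH^4 + (1+fps_X)*HH + fps_X + fps_X^3 = 0"
proof (rule fps_ext)
  fix n
  show "(fps_X^3 * HH^4 + (1+fps_X)*HH + fps_X + fps_X^3) $ n = (0::bit fps) $ n"
  proof (cases n)
    case 0 then show ?thesis by (simp add: fps_X_power_mult_nth onepX_nth HH_def fps_X_nth)
  next
    case (Suc m)
    have r: "hh (Suc m) = hh m + (if Suc m mod 4 = 3 then hh (Suc m div 4) else 0)
     + (if Suc m = 1 \<or> Suc m = 3 then 1 else 0)" by (rule hh.simps(2))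
    show ?thesis
    proof (cases "Suc m mod 4 = 3")
      case True
      then have a: "\<not> Suc m < 3 \<and> 4 dvd (Suc m - 3) \<and> (Suc m - 3) div 4 = Suc m div 4" by presburger
      show ?thesis using a True r Suc
        by (simp add: fps_X_power_mult_nth onepX_nth HH_def fps_X_nth pow4_nth add.assoc)
    next
      case False
      then have a: "Suc m < 3 \<or> \<not> 4 dvd (Suc m - 3)" by presburger
      show ?thesis using a False r Suc
        by (auto simp add: fps_X_power_mult_nth onepX_nth HH_def fps_X_nth pow4_nth add.assoc)
    qed
  qed
qed

lemma two_bit_fps: "(2::bit fps) = 0"
  by (simp only: fps_numeral_fps_const bit_2_eq_0 fps_const_0_eq_0)

lemma HH_Qp: "Qp HH = 0"
proof -
  have id: "(fps_X*HH + 1 + fps_X) * Qp HH = fps_X^3 * HH^4 + (1+fps_X)*HH + fps_X + fps_X^3"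
    unfolding Qp_def HQ_gen two_bit_fps by simp
  have "(fps_X*HH + 1 + fps_X) * Qp HH = 0" using id HH_quartic by simp
  moreover have "fps_X*HH + 1 + fps_X \<noteq> (0::bit fps)"
  proof
    assume "fps_X*HH + 1 + fps_X = (0::bit fps)"
    then have "(fps_X*HH + 1 + fps_X) $ 0 = (0::bit fps) $ 0" by simp
    then show False by simp
  qed
  ultimately show ?thesis by simp
qed


theorem mainTheorem2:
  fixes G :: "bit fps"
  assumes "fps_nth G 0 = 0"
    and "TM_F oo G = fps_X"
    and "G oo TM_F = fps_X"
  shows "fps_nth G 0 = 0 \<and> fps_nth G 1 = 1 \<and> fps_nth G 2 = 1 \<and> fps_nth G 3 = 0
    \<and> (\<forall>n::nat. n \<ge> 1 \<longrightarrow>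
          fps_nth G (8*n - 1) = fps_nth G (2*n - 1) \<and> fps_nth G (8*n) = fps_nth G (2*n - 1)
        \<and> fps_nth G (8*n + 1) = fps_nth G (2*n - 1) \<and> fps_nth G (8*n + 2) = fps_nth G (2*n - 1))
    \<and> (\<forall>n::nat. fps_nth G (8*n + 3) = 0 \<and> fps_nth G (8*n + 4) = 0
        \<and> fps_nth G (8*n + 5) = 0 \<and> fps_nth G (8*n + 6) = 0)"
proof -
  have "Qp G = 0" using G_Qp assms(1,2) by blast
  then have GH: "G = HH" using HH_Qp by (rule Qp_unique)
  have nth: "\<And>n. fps_nth G n = hh n" unfolding GH HH_def by simp
  show ?thesis unfolding nth by (rule hh_main)
qed

end
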